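(* Let $0=t_0<t_1<t_2<\dots<t_m$ be real numbers and let $p_1,\dots,p_m\ge 0$ with $\sum_{j=1}^m p_j=1$. For $j\in[m]$ let $q_j=\sum_{k=j}^m p_k$, and let $\|T\|_2=\sqrt{\sum_{j=1}^m p_jt_j^2}$. Then $$\sum_{j=1}^m (t_j-t_{j-1})\sqrt{q_j}\ \le\ t_1+\|T\|_2\sqrt{\ln(t_m/t_1)}.$$
   Context: Interpretation: $t_j$ are the possible stopping times of an algorithm, $p_j$ the probability of stopping at time $t_j$, $q_j$ the probability of stopping at time $\ge t_j$, and $\|T\|_2$ the $\ell_2$-averaged stopping time. *)

theory Defs
  imports Complex_Main
begin

end

theory Submission
  imports Defs "HOL-Analysis.Analysis"
begin

lemma tele2: "(n::nat) \<ge> 1 \<Longrightarrow> (\<Sum>j=2..n. (f j - f (j-1)::real)) = f n - f 1"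
proof (induction n)
  case 0 then show ?case by simp
next
  case (Suc n)
  show ?case
  proof (cases "n = 0")
    case True then show ?thesis by simp
  next
    case False
    then have "(\<Sum>j=2..Suc n. f j - f (j-1)) = (\<Sum>j=2..n. f j - f (j-1)) + (f (Suc n) - f n)"
      by (simp add: sum.cl_ivl_Suc)
    then show ?thesis using Suc False by simp
  qed
qed

lemma tele1: "(\<Sum>j=1..(n::nat). (f j - f (j-1)::real)) = f n - f 0"
  by (induction n) (auto simp: sum.cl_ivl_Suc)

lemma abel: "(\<Sum>j=1..(n::nat). (f j - f (j-1)) * (\<Sum>k=j..n. p k)) = (\<Sum>k=1..n. p k * (f k - f 0::real))"
proof (induction n)
  case 0 then show ?case by simp
next
  case (Suc n)
  have A: "(\<Sum>j=1..Suc n. (f j - f (j-1)) * (\<Sum>k=j..Suc n. p k))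
      = (\<Sum>j=1..Suc n. (f j - f (j-1)) * (\<Sum>k=j..n. p k) + (f j - f (j-1)) * p (Suc n))"
  proof (rule sum.cong)
    fix j assume "j \<in> {1..Suc n}"
    then have "(\<Sum>k=j..Suc n. p k) = (\<Sum>k=j..n. p k) + p (Suc n)" by (simp add: sum.atLeast_Suc_atMost sum.cl_ivl_Suc)
    then show "(f j - f (j-1)) * (\<Sum>k=j..Suc n. p k) = (f j - f (j-1)) * (\<Sum>k=j..n. p k) + (f j - f (j-1)) * p (Suc n)"
      by (simp add: algebra_simps)
  qed simp
  have B: "(\<Sum>j=1..Suc n. (f j - f (j-1)) * (\<Sum>k=j..n. p k)) = (\<Sum>j=1..n. (f j - f (j-1)) * (\<Sum>k=j..n. p k))"
    by simp
  have C: "(\<Sum>j=1..Suc n. (f j - f (j-1))) = f (Suc n) - f 0"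
    by (rule tele1)
  have D: "(\<Sum>j=1..Suc n. (f j - f (j-1)) * p (Suc n)) = (f (Suc n) - f 0) * p (Suc n)"
    using C by (simp add: sum_distrib_right[symmetric])
  show ?case unfolding A sum.distrib B D Suc by (simp add: algebra_simps)
qed

theorem mainTheorem8:
  fixes m :: nat and t p :: "nat \<Rightarrow> real"
  assumes m: "m \<ge> 1"
    and t0: "t 0 = 0"
    and tinc: "\<And>j. j < m \<Longrightarrow> t j < t (Suc j)"
    and pnn: "\<And>j. 1 \<le> j \<Longrightarrow> j \<le> m \<Longrightarrow> p j \<ge> 0"
    and psum: "(\<Sum>j=1..m. p j) = 1"
  shows "(\<Sum>j=1..m. (t j - t (j - 1)) * sqrt (\<Sum>k=j..m. p k))
         \<le> t 1 + sqrt (\<Sum>j=1..m. p j * (t j)\<^sup>2) * sqrt (ln (t m / t 1))"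
proof -
  have mono: "t i < t j" if "i < j" "j \<le> m" for i j
    using that
  proof (induction j)
    case 0 then show ?case by simp
  next
    case (Suc j)
    have "t j < t (Suc j)" using tinc Suc.prems by simp
    then show ?case using Suc by (cases "i = j") auto
  qed
  have tpos: "t j > 0" if "1 \<le> j" "j \<le> m" for j using mono[of 0 j] that t0 by simp
  define q where "q j = (\<Sum>k=j..m. p k)" for j
  have qnn: "q j \<ge> 0" if "1 \<le> j" for j using that unfolding q_def
    by (intro sum_nonneg) (auto intro: pnn)
  define d where "d j = t j - t (j-1)" for j
  have dpos: "d j > 0" if "1 \<le> j" "j \<le> m" for j unfolding d_def using mono[of "j-1" j] that by simp
  define a where "a j = sqrt (d j / t j)" for j
  define b where "b j = sqrt (d j * t j * q j)" for j
  have split: "{1..m} = insert 1 {2..m}" using m by auto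
  have LHS: "(\<Sum>j=1..m. (t j - t (j - 1)) * sqrt (\<Sum>k=j..m. p k)) = t 1 + (\<Sum>j=2..m. d j * sqrt (q j))"
    unfolding split using psum t0 by (simp add: d_def q_def)
  have ab: "d j * sqrt (q j) = \<bar>a j\<bar> * \<bar>b j\<bar>" if "j \<in> {2..m}" for j
  proof -
    have "d j > 0" "t j > 0" using that dpos tpos by auto
    have qj: "q j \<ge> 0" using qnn that by auto
    have "\<bar>a j\<bar> * \<bar>b j\<bar> = a j * b j" unfolding a_def b_def using \<open>d j > 0\<close> \<open>t j > 0\<close> qj by simp
    also have "\<dots> = sqrt (d j / t j * (d j * t j * q j))"
      unfolding a_def b_def by (simp only: real_sqrt_mult[symmetric])
    also have "d j / t j * (d j * t j * q j) = (d j)^2 * q j" using \<open>t j > 0\<close> by (simp add: field_simps power2_eq_square)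
    finally show ?thesis using \<open>d j > 0\<close> by (simp add: real_sqrt_mult)
  qed
  have CS: "(\<Sum>j=2..m. d j * sqrt (q j)) \<le> L2_set a {2..m} * L2_set b {2..m}"
    using L2_set_mult_ineq[of a b "{2..m}"] ab by simp
  have La: "(\<Sum>j=2..m. (a j)^2) \<le> ln (t m / t 1)"
  proof -
    have "(\<Sum>j=2..m. (a j)^2) \<le> (\<Sum>j=2..m. ln (t j) - ln (t (j-1)))"
    proof (rule sum_mono)
      fix j assume j: "j \<in> {2..m}"
      have p1: "t (j-1) > 0" "t j > 0" using j tpos[of "j-1"] tpos[of j] by auto
      have "ln (t (j-1) / t j) \<le> t (j-1) / t j - 1" using p1 by (intro ln_le_minus_one) simp
      moreover have "ln (t (j-1) / t j) = ln (t (j-1)) - ln (t j)" using p1 by (simp add: ln_div)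
      moreover have "(a j)^2 = 1 - t (j-1) / t j"
        unfolding a_def d_def using p1 j dpos[of j] by (simp add: d_def field_simps)
      ultimately show "(a j)^2 \<le> ln (t j) - ln (t (j-1))" by linarith
    qed
    also have "\<dots> = ln (t m) - ln (t 1)" using tele2[OF m, of "\<lambda>j. ln (t j)"] by simp
    also have "\<dots> = ln (t m / t 1)" using tpos[OF m order.refl] tpos[of 1] m by (simp add: ln_div)
    finally show ?thesis .
  qed
  have Lb: "(\<Sum>j=2..m. (b j)^2) \<le> (\<Sum>j=1..m. p j * (t j)\<^sup>2)"
  proof -
    have "(\<Sum>j=2..m. (b j)^2) = (\<Sum>j=2..m. d j * t j * q j)"
    proof (rule sum.cong)
      fix j assume j: "j \<in> {2..m}"
      have "d j * t j * q j \<ge> 0" using dpos[of j] tpos[of j] qnn[of j] j by simp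
      then show "(b j)^2 = d j * t j * q j" unfolding b_def by simp
    qed simp
    also have "\<dots> \<le> (\<Sum>j=2..m. ((t j)^2 - (t (j-1))^2) * q j)"
    proof (rule sum_mono)
      fix j assume j: "j \<in> {2..m}"
      have "t (j-1) > 0" using j tpos[of "j-1"] by auto
      then have "d j * t j \<le> (t j)^2 - (t (j-1))^2" using dpos[of j] j
        unfolding d_def by (simp add: power2_eq_square algebra_simps)
      then show "d j * t j * q j \<le> ((t j)^2 - (t (j-1))^2) * q j"
        using qnn[of j] j by (intro mult_right_mono) auto
    qed
    also have "\<dots> \<le> ((t 1)^2 - (t 0)^2) * q 1 + (\<Sum>j=2..m. ((t j)^2 - (t (j-1))^2) * q j)"
      using qnn[of 1] t0 by simp
    also have "\<dots> = (\<Sum>j=1..m. ((t j)^2 - (t (j-1))^2) * q j)"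
      unfolding split by simp
    also have "\<dots> = (\<Sum>j=1..m. p j * (t j)\<^sup>2)"
      unfolding q_def using abel[where f="\<lambda>j. (t j)^2" and n=m and p=p] t0 by simp
    finally show ?thesis .
  qed
  have "L2_set a {2..m} * L2_set b {2..m} \<le> sqrt (ln (t m / t 1)) * sqrt (\<Sum>j=1..m. p j * (t j)\<^sup>2)"
  proof -
    have "0 \<le> (\<Sum>j=2..m. (a j)^2)" by (intro sum_nonneg) simp
    then have "0 \<le> ln (t m / t 1)" using La by linarith
    moreover have "0 \<le> (\<Sum>j=2..m. (b j)^2)" by (intro sum_nonneg) simp
    ultimately show ?thesis unfolding L2_set_def
      by (intro mult_mono real_sqrt_le_mono La Lb) auto
  qed
  then show ?thesis using LHS CS by (simp add: mult.commute)
qed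

end
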